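(* Let $(X,\mathcal{T})$ be a finite topological space with furtherness function $\Psi$. The collection $\mathcal{B}^-=\{B^-(x,n)\mid x\in X,\ n\in\mathbb{N}\}$ of backward open balls $B^-(x,n)=\{y\in X\mid \Psi(y,x)<n\}$ is a basis for a topology on $X$, and this topology is the opposite topology $\mathcal{T}^{op}$, i.e. the topology on $X$ whose open sets are exactly the closed sets of $\mathcal{T}$.
   Context: Here $\mathbb{N}=\{1,2,3,\dots\}$. For a finite topological space $X$ and $x\in X$, $U_x$ denotes the minimal open set containing $x$. A nested sequence of open sets around $x$ is a finite sequence $U_0\subsetneq U_1\subsetneq\cdots\subsetneq U_m=X$ of open sets with $U_0=U_x$ such that for each $j$ there is no open set $V$ with $U_j\subsetneq V\subsetneq U_{j+1}$. The furtherness function $\Psi:X\times X\to\{0,1,\dots,|X|-1\}$ is defined by: $\Psi(x,y)$ is the smallest integer $k\ge 0$ such that there exists a nested sequence $(U_j)_{j\ge0}$ of open sets around $x$ with $y\in U_k$. *)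

theory Defs
  imports "HOL-Analysis.Analysis"
begin

definition minimal_open :: "'a topology \<Rightarrow> 'a \<Rightarrow> 'a set" where
  "minimal_open T x = topspace T \<inter> \<Inter>{U. openin T U \<and> x \<in> U}"

definition nested_seq :: "'a topology \<Rightarrow> 'a \<Rightarrow> 'a set list \<Rightarrow> bool" where
  "nested_seq T x Us \<longleftrightarrow>
     Us \<noteq> [] \<and>
     (\<forall>j < length Us. openin T (Us ! j)) \<and>
     Us ! 0 = minimal_open T x \<and>
     last Us = topspace T \<and>
     (\<forall>j. Suc j < length Us \<longrightarrow>
        Us ! j \<subset> Us ! Suc j \<and>
        \<not> (\<exists>V. openin T V \<and> Us ! j \<subset> V \<and> V \<subset> Us ! Suc j))"

definition furtherness :: "'a topology \<Rightarrow> 'a \<Rightarrow> 'a \<Rightarrow> nat" where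
  "furtherness T x y =
     (LEAST k. \<exists>Us. nested_seq T x Us \<and> k < length Us \<and> y \<in> Us ! k)"

definition backward_ball :: "'a topology \<Rightarrow> 'a \<Rightarrow> nat \<Rightarrow> 'a set" where
  "backward_ball T x n = {y \<in> topspace T. furtherness T y x < n}"

definition backward_balls :: "'a topology \<Rightarrow> 'a set set" where
  "backward_balls T = {backward_ball T x n | x n. x \<in> topspace T \<and> n \<ge> 1}"

definition is_basis_on :: "'a set \<Rightarrow> 'a set set \<Rightarrow> bool" where
  "is_basis_on X B \<longleftrightarrow>
     (\<forall>b\<in>B. b \<subseteq> X) \<and> \<Union>B = X \<and>
     (\<forall>b1\<in>B. \<forall>b2\<in>B. \<forall>x\<in>b1 \<inter> b2. \<exists>b3\<in>B. x \<in> b3 \<and> b3 \<subseteq> b1 \<inter> b2)"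

end

theory Submission
  imports Defs
begin

abbreviation hh :: "'a topology \<Rightarrow> 'a set \<Rightarrow> nat" where
  "hh T S \<equiv> card (minimal_open T ` S)"

lemma mo_eq:
  assumes "x \<in> topspace T"
  shows "minimal_open T x = \<Inter>{U. openin T U \<and> x \<in> U}"
  using assms unfolding minimal_open_def by (auto dest: openin_subset)

lemma mo_open:
  assumes fin: "finite (topspace T)" and x: "x \<in> topspace T"
  shows "openin T (minimal_open T x)"
proof -
  have "{U. openin T U \<and> x \<in> U} \<subseteq> Pow (topspace T)" by (auto dest: openin_subset)
  then have "finite {U. openin T U \<and> x \<in> U}" using fin by (simp add: finite_subset)
  moreover have "{U. openin T U \<and> x \<in> U} \<noteq> {}" using x by auto
  ultimately show ?thesis unfolding mo_eq[OF x] by (intro openin_Inter) auto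
qed

lemma mo_mem: "x \<in> topspace T \<Longrightarrow> x \<in> minimal_open T x"
  unfolding minimal_open_def by auto

lemma mo_sub: "openin T V \<Longrightarrow> x \<in> V \<Longrightarrow> minimal_open T x \<subseteq> V"
  unfolding minimal_open_def by auto

lemma mo_mono:
  assumes fin: "finite (topspace T)" and "y \<in> topspace T" "x \<in> minimal_open T y"
  shows "minimal_open T x \<subseteq> minimal_open T y"
  by (rule mo_sub[OF mo_open[OF assms(1,2)] assms(3)])

lemma mo_subX: "minimal_open T x \<subseteq> topspace T"
  unfolding minimal_open_def by auto

lemma open_of_sat:
  assumes fin: "finite (topspace T)" and "S \<subseteq> topspace T" "\<forall>z\<in>S. minimal_open T z \<subseteq> S"
  shows "openin T S"
proof -
  have eq: "S = \<Union>(minimal_open T ` S)"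
  proof
    show "S \<subseteq> \<Union>(minimal_open T ` S)"
    proof
      fix z assume z: "z \<in> S"
      have "z \<in> minimal_open T z" by (rule mo_mem[OF subsetD[OF assms(2) z]])
      then show "z \<in> \<Union>(minimal_open T ` S)" using z by blast
    qed
    show "\<Union>(minimal_open T ` S) \<subseteq> S" using assms(3) by blast
  qed
  have op: "openin T (\<Union>(minimal_open T ` S))"
  proof (rule openin_Union)
    fix U assume "U \<in> minimal_open T ` S"
    then obtain z where "z \<in> S" "U = minimal_open T z" by blast
    then show "openin T U" using mo_open[OF fin] assms(2) by blast
  qed
  from op show ?thesis unfolding eq[symmetric] .
qed

lemma sat:
  assumes fin: "finite (topspace T)" "openin T A" "p \<in> A" "q \<in> topspace T"
    "minimal_open T q = minimal_open T p"
  shows "q \<in> A"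
proof -
  have "q \<in> minimal_open T p" using mo_mem[OF assms(4)] assms(5) by simp
  then show ?thesis using mo_sub[OF assms(2,3)] by blast
qed

lemma cover_h:
  assumes fin: "finite (topspace T)" and A: "openin T A" and V: "openin T V" and "A \<subset> V"
    and nb: "\<not> (\<exists>W. openin T W \<and> A \<subset> W \<and> W \<subset> V)"
  shows "hh T (V - A) \<le> 1"
proof -
  obtain p where p: "p \<in> V - A" using assms by auto
  have pX: "p \<in> topspace T" using p V openin_subset by blast
  have eq: "A \<union> minimal_open T q = V" if q: "q \<in> V - A" for q
  proof -
    have qX: "q \<in> topspace T" using q V openin_subset by blast
    have o: "openin T (A \<union> minimal_open T q)" using A mo_open[OF fin qX] by blast
    have "A \<union> minimal_open T q \<subseteq> V" using mo_sub[OF V] q assms by auto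
    moreover have "A \<subset> A \<union> minimal_open T q" using q mo_mem[OF qX] by auto
    ultimately show ?thesis using nb o by blast
  qed
  have "minimal_open T ` (V - A) \<subseteq> {minimal_open T p}"
  proof
    fix U assume "U \<in> minimal_open T ` (V - A)"
    then obtain q where q: "q \<in> V - A" "U = minimal_open T q" by auto
    have qX: "q \<in> topspace T" using q V openin_subset by blast
    have "q \<in> minimal_open T p" using eq[OF p] q by auto
    then have 1: "minimal_open T q \<subseteq> minimal_open T p" using mo_mono[OF fin pX] by blast
    have "p \<in> minimal_open T q" using eq[OF q(1)] p by auto
    then have 2: "minimal_open T p \<subseteq> minimal_open T q" using mo_mono[OF fin qX] by blast
    show "U \<in> {minimal_open T p}" using 1 2 q by auto
  qed
  then have "hh T (V - A) \<le> card {minimal_open T p}" by (rule card_mono[rotated]) simp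
  then show ?thesis by simp
qed

lemma hadd:
  assumes fin: "finite (topspace T)" and A: "openin T A" and V: "openin T V" and W: "openin T W"
    and "A \<subseteq> V" "V \<subseteq> W"
  shows "hh T (W - A) = hh T (W - V) + hh T (V - A)"
proof -
  have WX: "W \<subseteq> topspace T" using W openin_subset by blast
  have un: "W - A = (W - V) \<union> (V - A)" using assms by auto
  have d: "minimal_open T ` (W - V) \<inter> minimal_open T ` (V - A) = {}"
  proof (rule ccontr)
    assume "\<not> ?thesis"
    then obtain q p where "q \<in> W - V" "p \<in> V - A" "minimal_open T q = minimal_open T p" by auto
    moreover have "q \<in> topspace T" using calculation WX by auto
    ultimately show False using sat[OF fin V] by blast
  qed
  have f1: "finite (minimal_open T ` (W - V))" "finite (minimal_open T ` (V - A))"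
    using finite_subset[OF _ fin] WX assms by auto
  show ?thesis unfolding un image_Un using card_Un_disjoint[OF f1 d] by simp
qed

lemma hpos:
  assumes "A \<subset> V" shows "hh T (V - A) \<ge> 1 \<or> infinite (minimal_open T ` (V - A))"
  using assms by (auto simp: Suc_le_eq card_gt_0_iff)

lemma cover_exists:
  assumes fin: "finite (topspace T)" and A: "openin T A" and W: "openin T W" and "A \<subset> W"
  shows "\<exists>V. openin T V \<and> A \<subset> V \<and> V \<subseteq> W \<and> \<not> (\<exists>U. openin T U \<and> A \<subset> U \<and> U \<subset> V)"
proof -
  obtain p0 where "p0 \<in> W - A" using assms by auto
  then obtain p where p: "p \<in> W - A" and pmin: "\<forall>q. q \<in> W - A \<longrightarrow> card (minimal_open T p - A) \<le> card (minimal_open T q - A)"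
    using ex_has_least_nat[of "\<lambda>q. q \<in> W - A" p0 "\<lambda>q. card (minimal_open T q - A)"] by blast
  have pX: "p \<in> topspace T" using p W openin_subset by blast
  define V where "V = A \<union> minimal_open T p"
  have Vo: "openin T V" unfolding V_def using A mo_open[OF fin pX] by blast
  have "A \<subset> V" unfolding V_def using p mo_mem[OF pX] by auto
  moreover have "V \<subseteq> W" unfolding V_def using assms mo_sub[OF W] p by auto
  moreover have "\<not> (\<exists>U. openin T U \<and> A \<subset> U \<and> U \<subset> V)"
  proof
    assume "\<exists>U. openin T U \<and> A \<subset> U \<and> U \<subset> V"
    then obtain U where U: "openin T U" "A \<subset> U" "U \<subset> V" by blast
    then obtain q where q: "q \<in> U - A" by auto
    have qX: "q \<in> topspace T" using q U openin_subset by blast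
    have s1: "minimal_open T q \<subseteq> U" using mo_sub[OF U(1)] q by auto
    have "p \<notin> U"
    proof
      assume "p \<in> U"
      then have "minimal_open T p \<subseteq> U" using mo_sub[OF U(1)] by auto
      then have "V \<subseteq> U" unfolding V_def using U by auto
      then show False using U by auto
    qed
    have qV: "q \<in> minimal_open T p" using q U V_def by auto
    have "minimal_open T q - A \<subset> minimal_open T p - A"
      using s1 mo_mono[OF fin pX qV] \<open>p \<notin> U\<close> p mo_mem[OF pX] by auto
    then have "card (minimal_open T q - A) < card (minimal_open T p - A)"
      by (intro psubset_card_mono) (auto intro: finite_subset[OF _ fin] simp: minimal_open_def)
    moreover have "q \<in> W - A" using q U \<open>V \<subseteq> W\<close> by auto
    ultimately show False using pmin by force
  qed
  ultimately show ?thesis using Vo by blast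
qed

definition chain_from :: "'a topology \<Rightarrow> 'a set \<Rightarrow> 'a set list \<Rightarrow> bool" where
  "chain_from T A Us \<longleftrightarrow>
     Us \<noteq> [] \<and>
     (\<forall>j < length Us. openin T (Us ! j)) \<and>
     Us ! 0 = A \<and>
     last Us = topspace T \<and>
     (\<forall>j. Suc j < length Us \<longrightarrow>
        Us ! j \<subset> Us ! Suc j \<and>
        \<not> (\<exists>V. openin T V \<and> Us ! j \<subset> V \<and> V \<subset> Us ! Suc j))"

lemma nested_chain: "nested_seq T x Us = chain_from T (minimal_open T x) Us"
  unfolding nested_seq_def chain_from_def by blast

lemma chain_prepend:
  assumes c: "chain_from T V Vs" and A: "openin T A" and AV: "A \<subset> V"
    and nb: "\<not> (\<exists>U. openin T U \<and> A \<subset> U \<and> U \<subset> V)"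
  shows "chain_from T A (A # Vs)"
proof -
  have ne: "Vs \<noteq> []" and op: "\<forall>j < length Vs. openin T (Vs ! j)" and v0: "Vs ! 0 = V"
    and la: "last Vs = topspace T"
    and cv: "\<forall>j. Suc j < length Vs \<longrightarrow> Vs ! j \<subset> Vs ! Suc j \<and> \<not> (\<exists>U. openin T U \<and> Vs ! j \<subset> U \<and> U \<subset> Vs ! Suc j)"
    using c unfolding chain_from_def by blast+
  have op2: "\<forall>j < length (A # Vs). openin T ((A # Vs) ! j)"
  proof (intro allI impI)
    fix j assume "j < length (A # Vs)"
    then show "openin T ((A # Vs) ! j)"
    proof (cases j)
      case 0 then show ?thesis using A by simp
    next
      case (Suc i) then show ?thesis using op \<open>j < length (A # Vs)\<close> by simp
    qed
  qed
  have cv2: "\<forall>j. Suc j < length (A # Vs) \<longrightarrow> (A # Vs) ! j \<subset> (A # Vs) ! Suc j \<and> \<not> (\<exists>U. openin T U \<and> (A # Vs) ! j \<subset> U \<and> U \<subset> (A # Vs) ! Suc j)"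
  proof (intro allI impI)
    fix j assume j: "Suc j < length (A # Vs)"
    show "(A # Vs) ! j \<subset> (A # Vs) ! Suc j \<and> \<not> (\<exists>U. openin T U \<and> (A # Vs) ! j \<subset> U \<and> U \<subset> (A # Vs) ! Suc j)"
    proof (cases j)
      case 0 then show ?thesis using AV nb v0 by simp
    next
      case (Suc i)
      then have "Suc i < length Vs" using j by simp
      then show ?thesis using cv Suc by simp
    qed
  qed
  have "last (A # Vs) = topspace T" using ne la by simp
  then show ?thesis unfolding chain_from_def using op2 cv2 by simp
qed

lemma chain_single: "chain_from T (topspace T) [topspace T]"
  unfolding chain_from_def by auto

lemma chain_exists:
  assumes fin: "finite (topspace T)"
  shows "openin T A \<Longrightarrow> openin T W \<Longrightarrow> A \<subseteq> W \<Longrightarrow>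
    \<exists>Us k. chain_from T A Us \<and> k < length Us \<and> Us ! k = W \<and> k \<le> hh T (W - A)"
proof (induction "card (topspace T - A)" arbitrary: A W rule: less_induct)
  case less
  have AX: "A \<subseteq> topspace T" using less openin_subset by blast
  have WX: "W \<subseteq> topspace T" using less openin_subset by blast
  show ?case
  proof (cases "A = W")
    case True
    show ?thesis
    proof (cases "A = topspace T")
      case True
      then show ?thesis using chain_single[of T] \<open>A = W\<close> by (intro exI[of _ "[topspace T]"] exI[of _ 0]) auto
    next
      case False
      then have "A \<subset> topspace T" using AX by auto
      from cover_exists[OF fin less(2) openin_topspace this] obtain V where
        V: "openin T V" "A \<subset> V" "V \<subseteq> topspace T" "\<not> (\<exists>U. openin T U \<and> A \<subset> U \<and> U \<subset> V)" by blast
      have "topspace T - V \<subset> topspace T - A" using V(2,3) AX by auto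
      then have "card (topspace T - V) < card (topspace T - A)"
        by (rule psubset_card_mono[OF finite_Diff[OF fin]])
      from less(1)[of V "topspace T", OF this V(1) openin_topspace V(3)] obtain Vs where
        "chain_from T V Vs" by blast
      then have "chain_from T A (A # Vs)" by (rule chain_prepend[OF _ less(2) V(2) V(4)])
      then show ?thesis using True by (intro exI[of _ "A # Vs"] exI[of _ 0]) auto
    qed
  next
    case False
    then have "A \<subset> W" using less by auto
    from cover_exists[OF fin less(2) less(3) this] obtain V where
      V: "openin T V" "A \<subset> V" "V \<subseteq> W" "\<not> (\<exists>U. openin T U \<and> A \<subset> U \<and> U \<subset> V)" by blast
    have "topspace T - V \<subset> topspace T - A" using V(2,3) AX WX by auto
    then have "card (topspace T - V) < card (topspace T - A)"
      by (rule psubset_card_mono[OF finite_Diff[OF fin]])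
    from less(1)[of V W, OF this V(1) less(3) V(3)] obtain Vs k where
      Vs: "chain_from T V Vs" "k < length Vs" "Vs ! k = W" "k \<le> hh T (W - V)" by blast
    have c: "chain_from T A (A # Vs)" by (rule chain_prepend[OF Vs(1) less(2) V(2) V(4)])
    have "hh T (W - A) = hh T (W - V) + hh T (V - A)"
      using hadd[OF fin less(2) V(1) less(3)] V by auto
    moreover have "hh T (V - A) \<ge> 1"
    proof -
      have "V - A \<subseteq> topspace T" using V(3) WX by auto
      then have "finite (minimal_open T ` (V - A))" using finite_subset[OF _ fin] by simp
      then show ?thesis using hpos[OF V(2), of T] by simp
    qed
    ultimately have "Suc k \<le> hh T (W - A)" using Vs by linarith
    then show ?thesis using c Vs by (intro exI[of _ "A # Vs"] exI[of _ "Suc k"]) auto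
  qed
qed

lemma chain_lower:
  assumes fin: "finite (topspace T)" and c: "chain_from T A Us"
  shows "k < length Us \<Longrightarrow> hh T (Us ! k - A) \<le> k"
proof (induction k)
  case 0
  have "Us ! 0 = A" using c unfolding chain_from_def by blast
  then show ?case by simp
next
  case (Suc k)
  have k1: "k < length Us" using Suc.prems by simp
  have op: "\<forall>j < length Us. openin T (Us ! j)" using c unfolding chain_from_def by blast
  have o1: "openin T (Us ! k)" "openin T (Us ! Suc k)" using op k1 Suc.prems by auto
  have cvall: "\<forall>j. Suc j < length Us \<longrightarrow> Us ! j \<subset> Us ! Suc j \<and> \<not> (\<exists>V. openin T V \<and> Us ! j \<subset> V \<and> V \<subset> Us ! Suc j)"
    using c unfolding chain_from_def by blast
  have cv: "Us ! k \<subset> Us ! Suc k" "\<not> (\<exists>V. openin T V \<and> Us ! k \<subset> V \<and> V \<subset> Us ! Suc k)"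
    using cvall Suc.prems by blast+
  have h1: "hh T (Us ! Suc k - Us ! k) \<le> 1" using cover_h[OF fin o1 cv] .
  have X0: "Us ! k \<subseteq> topspace T" using o1(1) openin_subset by blast
  have X1: "Us ! Suc k \<subseteq> topspace T" using o1(2) openin_subset by blast
  have "Us ! Suc k - A \<subseteq> (Us ! Suc k - Us ! k) \<union> (Us ! k - A)" by (rule subsetI) simp
  then have sub: "minimal_open T ` (Us ! Suc k - A) \<subseteq> minimal_open T ` (Us ! Suc k - Us ! k) \<union> minimal_open T ` (Us ! k - A)"
    unfolding image_Un[symmetric] by (rule image_mono)
  have f1: "finite (Us ! Suc k - Us ! k)" using finite_subset[OF X1 fin] by simp
  have f2: "finite (Us ! k - A)" using finite_subset[OF X0 fin] by simp
  have fu: "finite (minimal_open T ` (Us ! Suc k - Us ! k) \<union> minimal_open T ` (Us ! k - A))"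
    using f1 f2 by simp
  have "hh T (Us ! Suc k - A) \<le> card (minimal_open T ` (Us ! Suc k - Us ! k) \<union> minimal_open T ` (Us ! k - A))"
    by (rule card_mono[OF fu sub])
  also have "\<dots> \<le> hh T (Us ! Suc k - Us ! k) + hh T (Us ! k - A)" by (rule card_Un_le)
  finally show ?case using h1 Suc.IH[OF k1] by linarith
qed

lemma psi_eq:
  assumes fin: "finite (topspace T)" and x: "x \<in> topspace T" and y: "y \<in> topspace T"
  shows "furtherness T y x = hh T (minimal_open T x - minimal_open T y)"
proof -
  let ?P = "\<lambda>k. \<exists>Us. nested_seq T y Us \<and> k < length Us \<and> x \<in> Us ! k"
  have oy: "openin T (minimal_open T y)" and ox: "openin T (minimal_open T x)"
    using mo_open[OF fin] x y by auto
  have ow: "openin T (minimal_open T y \<union> minimal_open T x)" using ox oy by blast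
  from chain_exists[OF fin oy ow] obtain Us k where
    Us: "chain_from T (minimal_open T y) Us" "k < length Us" "Us ! k = minimal_open T y \<union> minimal_open T x"
      "k \<le> hh T ((minimal_open T y \<union> minimal_open T x) - minimal_open T y)" by blast
  have Pk: "?P k" using Us mo_mem[OF x] unfolding nested_chain by auto
  have eqd: "(minimal_open T y \<union> minimal_open T x) - minimal_open T y = minimal_open T x - minimal_open T y" by auto
  have "furtherness T y x \<le> k" unfolding furtherness_def by (rule Least_le[of ?P k, OF Pk])
  then have le1: "furtherness T y x \<le> hh T (minimal_open T x - minimal_open T y)"
    using Us(4) unfolding eqd by linarith
  have "?P (furtherness T y x)" unfolding furtherness_def by (rule LeastI[of ?P k, OF Pk])
  then obtain Vs where Vs: "chain_from T (minimal_open T y) Vs" "furtherness T y x < length Vs"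
    "x \<in> Vs ! furtherness T y x" unfolding nested_chain by blast
  let ?m = "furtherness T y x"
  have om: "openin T (Vs ! ?m)" using Vs(1,2) unfolding chain_from_def by blast
  have "minimal_open T x \<subseteq> Vs ! ?m" using mo_sub[OF om Vs(3)] .
  then have "hh T (minimal_open T x - minimal_open T y) \<le> hh T (Vs ! ?m - minimal_open T y)"
  proof (intro card_mono)
    have "Vs ! ?m - minimal_open T y \<subseteq> topspace T" using openin_subset[OF om] by blast
    then show "finite (minimal_open T ` (Vs ! ?m - minimal_open T y))" using finite_subset[OF _ fin] by simp
  qed (use \<open>minimal_open T x \<subseteq> Vs ! ?m\<close> in blast)
  also have "\<dots> \<le> ?m" using chain_lower[OF fin Vs(1) Vs(2)] .
  finally show ?thesis using le1 by simp
qed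

lemma ball_closed:
  assumes fin: "finite (topspace T)" and x: "x \<in> topspace T"
  shows "closedin T (backward_ball T x n)"
  unfolding closedin_def
proof
  show "backward_ball T x n \<subseteq> topspace T" unfolding backward_ball_def by auto
  show "openin T (topspace T - backward_ball T x n)"
  proof (rule open_of_sat[OF fin])
    show "topspace T - backward_ball T x n \<subseteq> topspace T" by auto
    show "\<forall>z\<in>topspace T - backward_ball T x n. minimal_open T z \<subseteq> topspace T - backward_ball T x n"
    proof (intro ballI subsetI)
      fix z w assume z: "z \<in> topspace T - backward_ball T x n" and w: "w \<in> minimal_open T z"
      have zX: "z \<in> topspace T" using z by auto
      have wX: "w \<in> topspace T" using w mo_subX[of T z] by blast
      have "minimal_open T w \<subseteq> minimal_open T z" using mo_mono[OF fin zX w] .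
      then have "hh T (minimal_open T x - minimal_open T z) \<le> hh T (minimal_open T x - minimal_open T w)"
        using finite_subset[OF mo_subX fin] by (intro card_mono) auto
      moreover have "\<not> furtherness T z x < n" using z zX unfolding backward_ball_def by auto
      ultimately have "\<not> furtherness T w x < n" using psi_eq[OF fin x zX] psi_eq[OF fin x wX] by simp
      then show "w \<in> topspace T - backward_ball T x n" using wX unfolding backward_ball_def by auto
    qed
  qed
qed

lemma ball1_mem:
  assumes fin: "finite (topspace T)" and x: "x \<in> topspace T"
  shows "x \<in> backward_ball T x 1"
  using psi_eq[OF fin x x] x unfolding backward_ball_def by simp

lemma ball1_sub:
  assumes fin: "finite (topspace T)" and x: "x \<in> b" and b: "closedin T b"
  shows "backward_ball T x 1 \<subseteq> b"
proof
  fix y assume y: "y \<in> backward_ball T x 1"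
  have yX: "y \<in> topspace T" using y unfolding backward_ball_def by auto
  have xX: "x \<in> topspace T" using x b closedin_subset by blast
  have "hh T (minimal_open T x - minimal_open T y) = 0"
    using y psi_eq[OF fin xX yX] unfolding backward_ball_def by simp
  then have "minimal_open T x - minimal_open T y = {}"
  proof -
    have "minimal_open T x - minimal_open T y \<subseteq> topspace T" using mo_subX[of T x] by blast
    then have "finite (minimal_open T ` (minimal_open T x - minimal_open T y))" using finite_subset[OF _ fin] by simp
    then show ?thesis using \<open>hh T _ = 0\<close> by simp
  qed
  then have xy: "x \<in> minimal_open T y" using mo_mem[OF xX] by auto
  show "y \<in> b"
  proof (rule ccontr)
    assume "y \<notin> b"
    then have yb: "y \<in> topspace T - b" using yX by auto
    have ob: "openin T (topspace T - b)" using b closedin_def by blast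
    have "minimal_open T y \<subseteq> topspace T - b" by (rule mo_sub[OF ob yb])
    then show False using xy x by auto
  qed
qed

theorem mainTheorem12:
  fixes T :: "'a topology"
  assumes "finite (topspace T)"
  shows "is_basis_on (topspace T) (backward_balls T) \<and>
         (\<forall>U. (U \<subseteq> topspace T \<and>
               (\<forall>x\<in>U. \<exists>b\<in>backward_balls T. x \<in> b \<and> b \<subseteq> U))
              \<longleftrightarrow> closedin T U)"
proof -
  note fin = assms
  have bc: "closedin T b" if "b \<in> backward_balls T" for b
    using that ball_closed[OF fin] unfolding backward_balls_def by auto
  have b1: "backward_ball T x 1 \<in> backward_balls T" if "x \<in> topspace T" for x
    using that unfolding backward_balls_def by auto
  have basis: "is_basis_on (topspace T) (backward_balls T)"
    unfolding is_basis_on_def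
  proof (intro conjI ballI)
    show "b \<subseteq> topspace T" if "b \<in> backward_balls T" for b
      using bc[OF that] closedin_subset by blast
    show "\<Union> (backward_balls T) = topspace T"
    proof
      show "\<Union> (backward_balls T) \<subseteq> topspace T" using bc closedin_subset by blast
      show "topspace T \<subseteq> \<Union> (backward_balls T)" using b1 ball1_mem[OF fin] by blast
    qed
    fix b1' b2 x assume h: "b1' \<in> backward_balls T" "b2 \<in> backward_balls T" "x \<in> b1' \<inter> b2"
    have xX: "x \<in> topspace T" using h bc closedin_subset by blast
    show "\<exists>b3\<in>backward_balls T. x \<in> b3 \<and> b3 \<subseteq> b1' \<inter> b2"
      using b1[OF xX] ball1_mem[OF fin xX] ball1_sub[OF fin _ bc[OF h(1)]] ball1_sub[OF fin _ bc[OF h(2)]] h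
      by blast
  qed
  have "(U \<subseteq> topspace T \<and> (\<forall>x\<in>U. \<exists>b\<in>backward_balls T. x \<in> b \<and> b \<subseteq> U)) \<longleftrightarrow> closedin T U" for U
  proof
    assume h: "U \<subseteq> topspace T \<and> (\<forall>x\<in>U. \<exists>b\<in>backward_balls T. x \<in> b \<and> b \<subseteq> U)"
    show "closedin T U" unfolding closedin_def
    proof
      show "U \<subseteq> topspace T" using h by auto
      show "openin T (topspace T - U)"
      proof (rule open_of_sat[OF fin])
        show "topspace T - U \<subseteq> topspace T" by auto
        show "\<forall>z\<in>topspace T - U. minimal_open T z \<subseteq> topspace T - U"
        proof (intro ballI subsetI)
          fix z w assume z: "z \<in> topspace T - U" and w: "w \<in> minimal_open T z"
          show "w \<in> topspace T - U"
          proof (rule ccontr)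
            assume "w \<notin> topspace T - U"
            then have "w \<in> U" using w mo_subX[of T z] by blast
            then obtain b where b: "b \<in> backward_balls T" "w \<in> b" "b \<subseteq> U" using h by blast
            have "z \<notin> b" using z b by auto
            then have zb: "z \<in> topspace T - b" using z by auto
            have ob: "openin T (topspace T - b)" using bc[OF b(1)] closedin_def by blast
            have "minimal_open T z \<subseteq> topspace T - b" by (rule mo_sub[OF ob zb])
            then show False using w b by auto
          qed
        qed
      qed
    qed
  next
    assume c: "closedin T U"
    show "U \<subseteq> topspace T \<and> (\<forall>x\<in>U. \<exists>b\<in>backward_balls T. x \<in> b \<and> b \<subseteq> U)"
    proof (intro conjI ballI)
      show "U \<subseteq> topspace T" using c closedin_subset by blast
      fix x assume x: "x \<in> U"
      then have xX: "x \<in> topspace T" using c closedin_subset by blast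
      show "\<exists>b\<in>backward_balls T. x \<in> b \<and> b \<subseteq> U"
        using b1[OF xX] ball1_mem[OF fin xX] ball1_sub[OF fin x c] by blast
    qed
  qed
  then show ?thesis using basis by blast
qed

end
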